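(* Consider rounds $t=1,\dots,T$ in which the allocation $a_t$ is the MMF output for entitlements $e$, where agent $i$'s reported demand is $d_{it}=\hat\rho_{it}v_{it}$ (with $\hat\rho_{it}\ge0$) and the other agents' reported demands are arbitrary. Write $\tilde a_{it}=a_{it}/v_{it}$. Then $\sum_{t=1}^T u_i(e_i/v_{it})-\sum_{t=1}^Tu_i(a_{it}/v_{it})\le\sum_{t=1}^T\mathbf{1}(\tilde a_{it}=\hat\rho_{it}\wedge\tilde a_{it}<\rho_i)\,\big(u_i(\rho_i)-u_i(\hat\rho_{it})\big).$
   Context: A divisible resource of size $1$ is shared by $n$ agents with entitlements $e_i>0$, $\sum_ie_i=1$. MMF$(e,d)$ on reported demands $d_1,\dots,d_n\ge0$: set $r=1$, $E=1$, $S=\{1,\dots,n\}$, $a=0$; process agents $j$ in ascending order of $d_j/e_j$; if $d_j<re_j/E$, set $a_j=d_j$, remove $j$ from $S$, $r\leftarrow r-d_j$, $E\leftarrow E-e_j$ and continue; otherwise set $a_k=re_k/E$ for all $k\in S$ and stop; output $a$. Agent $i$ has loads $v_{it}>0$, unit demand $\rho_i\ge0$ (true demand $v_{it}\rho_i$), and a utility $u_i$ of allocation per unit load that is non-decreasing, strictly increasing on $[0,\rho_i]$ and constant on $[\rho_i,\infty)$. *)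

theory Defs
  imports Complex_Main
begin

text \<open>One pass of the MMF procedure: the list holds the agents still in S, in
ascending order of d_j/e_j; r is the remaining resource, E the remaining
entitlement. The allocation starts at 0 everywhere.\<close>
fun mmf_loop :: "(nat \<Rightarrow> real) \<Rightarrow> (nat \<Rightarrow> real) \<Rightarrow> nat list \<Rightarrow> real \<Rightarrow> real \<Rightarrow> (nat \<Rightarrow> real)" where
  "mmf_loop e d [] r E = (\<lambda>k. 0)"
| "mmf_loop e d (j # js) r E =
     (if d j < r * e j / E
      then (mmf_loop e d js (r - d j) (E - e j))(j := d j)
      else (\<lambda>k. if k \<in> set (j # js) then r * e k / E else 0))"

definition MMF :: "nat \<Rightarrow> (nat \<Rightarrow> real) \<Rightarrow> (nat \<Rightarrow> real) \<Rightarrow> (nat \<Rightarrow> real)" where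
  "MMF n e d = mmf_loop e d (sort_key (\<lambda>j. d j / e j) [0..<n]) 1 1"

end

theory Submission
  imports Defs
begin

lemma mmf_loop_prop:
  "distinct js \<Longrightarrow> (\<forall>j\<in>set js. e j > 0) \<Longrightarrow> E = (\<Sum>j\<in>set js. e j) \<Longrightarrow> r \<ge> E
   \<Longrightarrow> i \<in> set js \<Longrightarrow> mmf_loop e d js r E i = d i \<or> mmf_loop e d js r E i \<ge> e i"
proof (induction js arbitrary: r E)
  case Nil
  then show ?case by simp
next
  case (Cons j js)
  have Epos: "E > 0" using Cons.prems
    by (simp add: add_pos_nonneg sum_nonneg less_imp_le)
  have E': "E - e j = (\<Sum>j\<in>set js. e j)" using Cons.prems by simp
  have E'nn: "E - e j \<ge> 0" unfolding E' using Cons.prems(2)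
    by (simp add: sum_nonneg less_imp_le)
  show ?case
  proof (cases "d j < r * e j / E")
    case True
    show ?thesis
    proof (cases "i = j")
      case True
      then show ?thesis using \<open>d j < r * e j / E\<close> by simp
    next
      case False
      have "r - r * e j / E \<ge> E - e j"
      proof -
        have "(r - E) * (E - e j) \<ge> 0"
          using Cons.prems(4) E'nn by simp
        then have h: "r * E - r * e j \<ge> (E - e j) * E" by (simp add: algebra_simps)
        have "r - r * e j / E = (r * E - r * e j) / E" using Epos by (simp add: field_simps)
        then show ?thesis using h Epos by (simp add: le_divide_eq)
      qed
      then have "r - d j \<ge> E - e j" using True by linarith
      then have "mmf_loop e d js (r - d j) (E - e j) i = d i \<or> mmf_loop e d js (r - d j) (E - e j) i \<ge> e i"
        using Cons.IH[of "E - e j" "r - d j"] Cons.prems E' False by simp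
      then show ?thesis using True False by simp
    qed
  next
    case False
    have "e i > 0" using Cons.prems by auto
    then have "r * e i \<ge> e i * E" using Cons.prems(4)
      by (simp add: mult.commute mult_right_mono)
    then have "r * e i / E \<ge> e i" using Epos by (simp add: le_divide_eq)
    then show ?thesis using False Cons.prems(5) by simp
  qed
qed

lemma MMF_prop:
  assumes "\<forall>j<n. e j > 0" "(\<Sum>j<n. e j) = 1" "i < n"
  shows "MMF n e d i = d i \<or> MMF n e d i \<ge> e i"
proof -
  let ?js = "sort_key (\<lambda>j. d j / e j) [0..<n]"
  have s: "set ?js = {..<n}" by auto
  have "(\<Sum>j\<in>set ?js. e j) = 1" using assms(2) s by simp
  then show ?thesis unfolding MMF_def
    using mmf_loop_prop[of ?js e 1 1 i d] assms s by auto
qed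

theorem lemma5:
  fixes n :: nat and e :: "nat \<Rightarrow> real" and i :: nat and T :: nat
    and d :: "nat \<Rightarrow> nat \<Rightarrow> real"   \<comment> \<open>d t j: reported demand of agent j in round t\<close>
    and v :: "nat \<Rightarrow> real"             \<comment> \<open>v t: load of agent i in round t\<close>
    and \<rho> :: real and \<rho>hat :: "nat \<Rightarrow> real" and u :: "real \<Rightarrow> real"
  assumes e_pos: "\<forall>j<n. e j > 0"
    and e_sum: "(\<Sum>j<n. e j) = 1"
    and i_lt: "i < n"
    and d_nonneg: "\<forall>t\<in>{1..T}. \<forall>j<n. d t j \<ge> 0"
    and v_pos: "\<forall>t\<in>{1..T}. v t > 0"
    and rho_nonneg: "\<rho> \<ge> 0"
    and rhohat_nonneg: "\<forall>t\<in>{1..T}. \<rho>hat t \<ge> 0"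
    and d_i: "\<forall>t\<in>{1..T}. d t i = \<rho>hat t * v t"
    and u_mono: "mono_on {0..} u"
    and u_strict: "strict_mono_on {0..\<rho>} u"
    and u_const: "\<forall>x\<ge>\<rho>. u x = u \<rho>"
  shows "(\<Sum>t=1..T. u (e i / v t)) - (\<Sum>t=1..T. u (MMF n e (d t) i / v t))
         \<le> (\<Sum>t=1..T. (if MMF n e (d t) i / v t = \<rho>hat t \<and> MMF n e (d t) i / v t < \<rho>
                        then u \<rho> - u (\<rho>hat t) else 0))"
proof -
  have ule: "u x \<le> u \<rho>" if "x \<ge> 0" for x
  proof (cases "x \<le> \<rho>")
    case True then show ?thesis using u_mono that rho_nonneg unfolding mono_on_def by auto
  next
    case False then have "u x = u \<rho>" using u_const[rule_format, of x] by linarith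
    then show ?thesis by simp
  qed
  have step: "u (e i / v t) - u (MMF n e (d t) i / v t)
      \<le> (if MMF n e (d t) i / v t = \<rho>hat t \<and> MMF n e (d t) i / v t < \<rho>
                        then u \<rho> - u (\<rho>hat t) else 0)" if t: "t \<in> {1..T}" for t
  proof -
    let ?a = "MMF n e (d t) i / v t"
    have vp: "v t > 0" using v_pos t by auto
    have ep: "e i > 0" using e_pos i_lt by auto
    have rh: "\<rho>hat t \<ge> 0" using rhohat_nonneg t by auto
    have ind: "(if ?a = \<rho>hat t \<and> ?a < \<rho> then u \<rho> - u (\<rho>hat t) else 0) \<ge> 0"
      using ule[OF rh] by simp
    have eiv: "e i / v t \<ge> 0" using vp ep by simp
    from MMF_prop[OF e_pos e_sum i_lt, of "d t"]
    show ?thesis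
    proof
      assume A: "MMF n e (d t) i = d t i"
      then have a: "?a = \<rho>hat t" using d_i t vp by auto
      show ?thesis
      proof (cases "?a < \<rho>")
        case True
        then have c: "(if ?a = \<rho>hat t \<and> ?a < \<rho> then u \<rho> - u (\<rho>hat t) else 0) = u \<rho> - u (\<rho>hat t)"
          using a by simp
        show ?thesis unfolding c using a ule[OF eiv] by simp
      next
        case False
        then have "u ?a = u \<rho>" using u_const[rule_format, of ?a] by linarith
        then show ?thesis using ule[OF eiv] ind by linarith
      qed
    next
      assume "MMF n e (d t) i \<ge> e i"
      then have "?a \<ge> e i / v t" using vp by (simp add: divide_right_mono)
      moreover have "?a \<in> {0..}" "e i / v t \<in> {0..}" using eiv calculation by auto
      ultimately have "u (e i / v t) \<le> u ?a" using u_mono unfolding mono_on_def by blast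
      then show ?thesis using ind by linarith
    qed
  qed
  have "(\<Sum>t=1..T. u (e i / v t)) - (\<Sum>t=1..T. u (MMF n e (d t) i / v t))
      = (\<Sum>t=1..T. u (e i / v t) - u (MMF n e (d t) i / v t))"
    by (simp add: sum_subtractf)
  also have "\<dots> \<le> (\<Sum>t=1..T. (if MMF n e (d t) i / v t = \<rho>hat t \<and> MMF n e (d t) i / v t < \<rho>
                        then u \<rho> - u (\<rho>hat t) else 0))"
    by (rule sum_mono) (use step in auto)
  finally show ?thesis .
qed

end
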